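(* Let $m\ge 2$, $h\ge 1$ be integers and $q=2^m$. Index the coordinates of vectors in $\mathrm{GF}(2^h)^{q+1}$ by the points of the projective line $\mathrm{PG}(1,q)=\mathrm{GF}(q)\cup\{\infty\}$, and let $\mathrm{PGL}_2(\mathrm{GF}(q))$ act on $\mathrm{GF}(2^h)^{q+1}$ by $\pi:(c_x)_{x\in \mathrm{PG}(1,q)}\mapsto (c_{\pi(x)})_{x\in\mathrm{PG}(1,q)}$. If $\mathcal C$ is a linear code over $\mathrm{GF}(2^h)$ of length $q+1$ that is invariant under this action (i.e. $\pi(\mathbf c)\in\mathcal C$ for all $\mathbf c\in\mathcal C$, $\pi\in\mathrm{PGL}_2(\mathrm{GF}(q))$), then $\mathcal C$ is one of the following: (I) the zero code $\{(0,\dots,0)\}$; (II) the whole space $\mathrm{GF}(2^h)^{q+1}$; (III) the repetition code $\{(c,c,\dots,c): c\in\mathrm{GF}(2^h)\}$; (IV) the code $\{(c_0,\dots,c_q)\in\mathrm{GF}(2^h)^{q+1}: c_0+\cdots+c_q=0\}$.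
   Context: $\mathrm{PGL}_2(\mathrm{GF}(q))$ acts on $\mathrm{PG}(1,q)$ by linear fractional transformations $x\mapsto \frac{ax+b}{cx+d}$ ($ad-bc\neq 0$), with the usual conventions for $\infty$. *)

theory Defs
  imports Main
begin

text \<open>The projective line PG(1,q) over a field 'q is modelled as 'q option,
  with None playing the role of the point at infinity.\<close>

definition lft :: "'q::field \<Rightarrow> 'q \<Rightarrow> 'q \<Rightarrow> 'q \<Rightarrow> 'q option \<Rightarrow> 'q option" where
  "lft a b c d x = (case x of
      None \<Rightarrow> (if c = 0 then None else Some (a / c))
    | Some t \<Rightarrow> (if c * t + d = 0 then None else Some ((a * t + b) / (c * t + d))))"

definition PGL2 :: "('q::field option \<Rightarrow> 'q option) set" where
  "PGL2 = {lft a b c d | a b c d. a * d - b * c \<noteq> 0}"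

definition linear_code :: "('i \<Rightarrow> 'f::field) set \<Rightarrow> bool" where
  "linear_code C \<longleftrightarrow> (\<lambda>_. 0) \<in> C \<and>
     (\<forall>u\<in>C. \<forall>v\<in>C. (\<lambda>x. u x + v x) \<in> C) \<and>
     (\<forall>k. \<forall>u\<in>C. (\<lambda>x. k * u x) \<in> C)"

end

theory Submission imports Defs "HOL-Number_Theory.Residues" "HOL-Computational_Algebra.Euclidean_Algorithm" begin

lemma char2:
  assumes "card (UNIV :: 'f::{field,finite} set) = 2 ^ h" "h \<ge> 1" "m \<ge> 1"
  shows "(of_nat (2^m) :: 'f) = 0"
proof -
  have pos: "CHAR('f) > 0" by (simp add: finite_imp_CHAR_pos)
  have pr: "prime CHAR('f)" using prime_CHAR_semidom[OF pos] .
  have "CHAR('f) dvd 2 ^ h" using CHAR_dvd_CARD[where 'a='f] assms(1) by simp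
  then have "CHAR('f) dvd 2" using pr prime_dvd_power by blast
  moreover have "(2::nat) dvd 2^m" using assms(3) by (cases m) auto
  ultimately have "CHAR('f) dvd 2^m" using dvd_trans by blast
  then show ?thesis by (simp add: of_nat_eq_0_iff_char_dvd del: of_nat_power)
qed

lemma sum_option: "(\<Sum>x\<in>UNIV. v x) = v None + (\<Sum>t\<in>UNIV. v (Some t))"
  for v :: "'q::finite option \<Rightarrow> 'f::comm_monoid_add"
proof -
  have "UNIV = insert None (Some ` (UNIV::'q set))" by (auto intro: option.exhaust)
  then have "(\<Sum>x\<in>UNIV. v x) = (\<Sum>x\<in>insert None (Some ` (UNIV::'q set)). v x)" by simp
  also have "\<dots> = v None + (\<Sum>x\<in>Some ` (UNIV::'q set). v x)" by (subst sum.insert) auto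
  also have "\<dots> = v None + (\<Sum>t\<in>UNIV. v (Some t))" by (subst sum.reindex) auto
  finally show ?thesis .
qed

lemma sum_inverse: "(\<Sum>t\<in>UNIV. g (inverse t)) = (\<Sum>t\<in>UNIV. g t)"
  for g :: "'q::{field,finite} \<Rightarrow> 'f::comm_monoid_add"
  by (rule sum.reindex_bij_witness[where i=inverse and j=inverse]) auto

lemma sum_shift: "(\<Sum>b\<in>UNIV. g (t + b)) = (\<Sum>b\<in>UNIV. g b)"
  for g :: "'q::{field,finite} \<Rightarrow> 'f::comm_monoid_add"
  by (rule sum.reindex_bij_witness[where i="\<lambda>b. b - t" and j="\<lambda>b. t + b"]) auto

lemma code_sum:
  assumes "linear_code C" "finite A" "\<forall>a\<in>A. g a \<in> C"
  shows "(\<lambda>z. \<Sum>a\<in>A. g a z) \<in> C"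
  using assms(2,3)
proof (induction A rule: finite_induct)
  case empty then show ?case using assms(1) by (simp add: linear_code_def)
next
  case (insert x F)
  then show ?case using assms(1) unfolding linear_code_def by simp
qed

lemma lft_trans: "lft 1 b 0 1 x = (case x of None \<Rightarrow> None | Some t \<Rightarrow> Some (t + b))"
  by (cases x) (auto simp: lft_def add.commute)

lemma lft_inv: "lft 0 1 1 (- s) x = (case x of None \<Rightarrow> Some 0 | Some t \<Rightarrow> (if t = s then None else Some (inverse (t - s))))"
  by (cases x) (auto simp: lft_def field_simps)

lemma pgl_trans: "lft 1 b 0 1 \<in> PGL2" unfolding PGL2_def by force
lemma pgl_inv: "lft 0 1 1 (- s) \<in> PGL2" unfolding PGL2_def by force


theorem theorem11:
  fixes m h :: nat
    and C :: "('q::{field,finite} option \<Rightarrow> 'f::{field,finite}) set"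
  assumes "m \<ge> 2" and "h \<ge> 1"
    and "card (UNIV :: 'q set) = 2 ^ m" and "card (UNIV :: 'f set) = 2 ^ h"
    and "linear_code C"
    and "\<forall>\<pi>\<in>PGL2. \<forall>v\<in>C. (\<lambda>x. v (\<pi> x)) \<in> C"
  shows "C = {(\<lambda>_. 0)} \<or> C = UNIV \<or> C = {(\<lambda>_. k) | k. True}
         \<or> C = {v. (\<Sum>x\<in>UNIV. v x) = 0}"
proof -
  note lc = assms(5)[unfolded linear_code_def]
  have zero: "(\<lambda>_. 0) \<in> C" using lc by blast
  have add: "\<And>u v. u \<in> C \<Longrightarrow> v \<in> C \<Longrightarrow> (\<lambda>x. u x + v x) \<in> C" using lc by blast
  have smul: "\<And>k u. u \<in> C \<Longrightarrow> (\<lambda>x. k * u x) \<in> C" using lc by blast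
  have perm: "\<And>\<pi> v. \<pi> \<in> PGL2 \<Longrightarrow> v \<in> C \<Longrightarrow> (\<lambda>x. v (\<pi> x)) \<in> C" using assms(6) by blast
  have q0: "(of_nat (card (UNIV :: 'q set)) :: 'f) = 0"
    using char2[OF assms(4) assms(2), of m] assms(1,3) by simp
  define S where "S v = (\<Sum>t\<in>UNIV. v (Some t))" for v :: "'q option \<Rightarrow> 'f"
  show ?thesis
  proof (cases "\<forall>v\<in>C. S v = 0")
    case True
    have a: "w None = w (Some 0)" if wC: "w \<in> C" for w
    proof -
      have "(\<lambda>x. w (lft 0 1 1 (- 0) x)) \<in> C" using perm[OF pgl_inv wC] .
      then have "S (\<lambda>x. w (lft 0 1 1 (- 0) x)) = 0" using True by blast
      moreover have "S (\<lambda>x. w (lft 0 1 1 (- 0) x)) = 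
           (\<Sum>t\<in>UNIV. (if t = 0 then w None - w (Some (inverse t)) else 0) + w (Some (inverse t)))"
        unfolding S_def lft_inv by (intro sum.cong) auto
      moreover have "\<dots> = w None - w (Some 0) + S w"
        unfolding S_def sum.distrib sum_inverse[of "\<lambda>t. w (Some t)"] by simp
      ultimately show ?thesis using True wC by (simp add: S_def)
    qed
    have const: "v = (\<lambda>_. v None)" if vC: "v \<in> C" for v
    proof
      fix x
      show "v x = v None"
      proof (cases x)
        case (Some b)
        have "(\<lambda>x. v (lft 1 b 0 1 x)) \<in> C" using perm[OF pgl_trans vC] .
        from a[OF this] show ?thesis using Some by (simp add: lft_trans)
      qed simp
    qed
    show ?thesis
    proof (cases "C = {\<lambda>_. 0}")
      case False
      then obtain v where vC: "v \<in> C" and "v \<noteq> (\<lambda>_. 0)" using zero by blast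
      then have k: "v None \<noteq> 0" using const[OF vC] by metis
      have "C = {(\<lambda>_. k) | k. True}"
      proof
        show "C \<subseteq> {(\<lambda>_. k) | k. True}" using const by blast
        show "{(\<lambda>_. k) | k. True} \<subseteq> C"
        proof clarify
          fix k
          have "(\<lambda>x. (k / v None) * v x) \<in> C" using smul[OF vC] .
          moreover have "(\<lambda>x. (k / v None) * v x) = (\<lambda>_. k)"
            using const[OF vC] k by (metis nonzero_eq_divide_eq)
          ultimately show "(\<lambda>_. k) \<in> C" by simp
        qed
      qed
      then show ?thesis by blast
    qed blast
  next
    case False
    then obtain v where vC: "v \<in> C" and Sv: "S v \<noteq> 0" by blast
    define w where "w = (\<lambda>z. \<Sum>b\<in>UNIV. v (lft 1 b 0 1 z))"
    have wC: "w \<in> C" unfolding w_def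
      by (rule code_sum[OF assms(5)]) (use perm[OF pgl_trans vC] in auto)
    have w: "w = (\<lambda>z. if z = None then 0 else S v)"
    proof
      fix z show "w z = (if z = None then 0 else S v)"
      proof (cases z)
        case None then show ?thesis using q0 by (simp add: w_def lft_trans)
      next
        case (Some t) then show ?thesis
          by (simp add: w_def lft_trans S_def sum_shift[of "\<lambda>b. v (Some b)"])
      qed
    qed
    define u :: "'q option \<Rightarrow> 'f" where "u = (\<lambda>z. if z = None then 0 else 1)"
    have uC: "u \<in> C"
    proof -
      have "(\<lambda>x. inverse (S v) * w x) \<in> C" using smul[OF wC] .
      moreover have "(\<lambda>x. inverse (S v) * w x) = u" using Sv unfolding w u_def by auto
      ultimately show ?thesis by simp
    qed
    have f: "(\<lambda>z. if z = p then 0 else 1) \<in> C" for p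
    proof (cases p)
      case None then show ?thesis using uC u_def by simp
    next
      case (Some s)
      have "(\<lambda>x. u (lft 0 1 1 (- s) x)) \<in> C" using perm[OF pgl_inv uC] .
      moreover have "(\<lambda>x. u (lft 0 1 1 (- s) x)) = (\<lambda>z. if z = p then 0 else 1)"
      proof
        fix x show "u (lft 0 1 1 (- s) x) = (if x = p then 0 else 1)"
          using Some by (cases x) (auto simp: u_def lft_inv)
      qed
      ultimately show ?thesis by simp
    qed
    have sub: "{v. (\<Sum>x\<in>UNIV. v x) = 0} \<subseteq> C"
    proof clarify
      fix y :: "'q option \<Rightarrow> 'f" assume y: "(\<Sum>x\<in>UNIV. y x) = 0"
      have "(\<lambda>z. \<Sum>p\<in>UNIV. (\<lambda>z. (- y p) * (if z = p then 0 else 1)) z) \<in> C"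
        by (intro code_sum[OF assms(5)] finite_UNIV ballI) (rule smul[OF f])
      moreover have "(\<lambda>z. \<Sum>p\<in>UNIV. (\<lambda>z. (- y p) * (if z = p then 0 else 1)) z) = y"
      proof
        fix z
        have "(\<Sum>p\<in>UNIV. (- y p) * (if z = p then 0 else 1)) = (\<Sum>p\<in>UNIV. (- y p) - (if z = p then - y p else 0))"
          by (intro sum.cong) auto
        also have "\<dots> = y z" using y by (simp add: sum_subtractf sum_negf)
        finally show "(\<Sum>p\<in>UNIV. (\<lambda>z. (- y p) * (if z = p then 0 else 1)) z) = y z" by simp
      qed
      ultimately show "y \<in> C" by simp
    qed
    show ?thesis
    proof (cases "C \<subseteq> {v. (\<Sum>x\<in>UNIV. v x) = 0}")
      case True then show ?thesis using sub by blast
    next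
      case False
      then obtain g where gC: "g \<in> C" and g: "(\<Sum>x\<in>UNIV. g x) \<noteq> 0" by blast
      have all: "y \<in> C" for y :: "'q option \<Rightarrow> 'f"
      proof -
        define c where "c = (\<Sum>x\<in>UNIV. y x) / (\<Sum>x\<in>UNIV. g x)"
        have "(\<Sum>x\<in>UNIV. y x - c * g x) = 0"
          using g unfolding sum_subtractf sum_distrib_left[symmetric] c_def by simp
        then have "(\<lambda>x. y x - c * g x) \<in> C" using sub by blast
        from add[OF this smul[OF gC, of c]] show "y \<in> C" by simp
      qed
      then have "C = UNIV" by blast
      then show ?thesis by blast
    qed
  qed
qed

end
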